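(* Let $\Delta$ be a quasi-forest of dimension $d-1$ with $s+1$ facets and $f$-vector $(f_0,\ldots,f_{d-1})$, and put $f_{-1}=1$. Then there exist an integer $t$ with $0\le t\le s$ and sequences of integers $(\delta_1,\ldots,\delta_t,\delta_{t+1})$ and $(e_1,\ldots,e_t)$ with $\delta_i\neq e_j$ for all $i,j$, such that $0<\delta_1\le\cdots\le\delta_t\le\delta_{t+1}=d$, $0\le e_1\le\cdots\le e_t<d$, $e_j<\delta_j$ for $1\le j\le t$, and $$\sum_{i=0}^{d} f_{i-1}x^i=\sum_{j=1}^{t+1}(1+x)^{\delta_j}-\sum_{j=1}^{t}(1+x)^{e_j}.$$
   Context: A simplicial complex $\Delta$ on $[n]$ is a collection of subsets of $[n]$ containing all singletons and closed under taking subsets; $\dim\Delta=d-1$ where $d$ is the maximal face size; facets are maximal faces; $f_i$ is the number of faces with $i+1$ elements. For facets $F_{i_1},\ldots,F_{i_q}$, $\langle F_{i_1},\ldots,F_{i_q}\rangle$ is the subcomplex of all faces contained in some $F_{i_j}$. A facet $F$ is a leaf if there is another facet $G\neq F$ with $H\cap F\subset G\cap F$ for all facets $H\neq F$. A quasi-forest is a simplicial complex whose facets admit an ordering $H_1,\ldots,H_m$ such that for each $1<j\le m$, $H_j$ is a leaf of $\langle H_1,\ldots,H_j\rangle$. *)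

theory Defs
  imports "HOL-Computational_Algebra.Polynomial"
begin

definition simplicial_complex :: "nat \<Rightarrow> nat set set \<Rightarrow> bool" where
  "simplicial_complex n \<Delta> \<longleftrightarrow>
     \<Delta> \<subseteq> Pow {1..n} \<and> (\<forall>i\<in>{1..n}. {i} \<in> \<Delta>) \<and>
     (\<forall>F\<in>\<Delta>. \<forall>G. G \<subseteq> F \<longrightarrow> G \<in> \<Delta>)"

definition facets :: "'a set set \<Rightarrow> 'a set set" where
  "facets \<Delta> = {F \<in> \<Delta>. \<forall>G\<in>\<Delta>. F \<subseteq> G \<longrightarrow> G = F}"

text \<open>Maximal face size d (so dim = d - 1).\<close>
definition max_face_size :: "'a set set \<Rightarrow> nat" where
  "max_face_size \<Delta> = Max (card ` \<Delta>)"

text \<open>Number of faces with k elements; f_i = face_count \<Delta> (i+1), f_{-1} = face_count \<Delta> 0.\<close>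
definition face_count :: "'a set set \<Rightarrow> nat \<Rightarrow> nat" where
  "face_count \<Delta> k = card {A \<in> \<Delta>. card A = k}"

definition gen_complex :: "'a set set \<Rightarrow> 'a set set" where
  "gen_complex S = {A. \<exists>F\<in>S. A \<subseteq> F}"

definition is_leaf :: "'a set set \<Rightarrow> 'a set \<Rightarrow> bool" where
  "is_leaf \<Delta> F \<longleftrightarrow> F \<in> facets \<Delta> \<and>
     (\<exists>G\<in>facets \<Delta>. G \<noteq> F \<and> (\<forall>H\<in>facets \<Delta>. H \<noteq> F \<longrightarrow> H \<inter> F \<subseteq> G \<inter> F))"

text \<open>Quasi-forest: facets admit an ordering H_1,...,H_m (here the list Hs, 0-indexed)
such that H_j is a leaf of the subcomplex generated by H_1,...,H_j for 1 < j \<le> m.\<close>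
definition quasi_forest :: "'a set set \<Rightarrow> bool" where
  "quasi_forest \<Delta> \<longleftrightarrow> (\<exists>Hs. distinct Hs \<and> set Hs = facets \<Delta> \<and>
     (\<forall>j. 1 \<le> j \<and> j < length Hs \<longrightarrow> is_leaf (gen_complex (set (take (Suc j) Hs))) (Hs ! j)))"

end

theory Submission
  imports Defs "HOL-Library.Multiset"
begin

abbreviation X1 :: "int poly" where "X1 \<equiv> [:1, 1:]"
abbreviation X0 :: "int poly" where "X0 \<equiv> [:0, 1:]"

definition FP :: "nat set set \<Rightarrow> int poly" where
  "FP S = (\<Sum>A\<in>S. [:0, 1:] ^ card A)"

definition PM :: "nat multiset \<Rightarrow> int poly" where
  "PM D = (\<Sum>k\<in>#D. X1 ^ k)"

definition hall :: "nat multiset \<Rightarrow> nat multiset \<Rightarrow> bool" where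
  "hall D E \<longleftrightarrow> (\<forall>v\<in>#E. size {#x\<in>#E. v \<le> x#} < size {#x\<in>#D. v < x#})"

lemma FP_Pow: "finite H \<Longrightarrow> FP (Pow H) = X1 ^ card H"
proof (induction H rule: finite_induct)
  case empty
  then show ?case by (simp add: FP_def)
next
  case (insert x F)
  have disj: "Pow F \<inter> insert x ` Pow F = {}" using insert by auto
  have inj: "inj_on (insert x) (Pow F)" unfolding inj_on_def using insert.hyps(2) by (metis PowD insert_ident subsetD)
  have fin: "finite (Pow F)" "finite (insert x ` Pow F)" using insert by auto
  have "FP (Pow (insert x F)) = FP (Pow F) + (\<Sum>A\<in>insert x ` Pow F. X0 ^ card A)"
    unfolding FP_def Pow_insert using sum.union_disjoint[OF fin disj] by simp
  also have "(\<Sum>A\<in>insert x ` Pow F. X0 ^ card A) = (\<Sum>A\<in>Pow F. X0 ^ card (insert x A))"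
    using sum.reindex[OF inj] by simp
  also have "\<dots> = (\<Sum>A\<in>Pow F. X0 * X0 ^ card A)"
  proof (rule sum.cong[OF refl])
    fix A assume "A \<in> Pow F"
    then have "finite A" "x \<notin> A" using insert finite_subset by auto
    then show "X0 ^ card (insert x A) = X0 * (X0 ^ card A)" by simp
  qed
  also have "\<dots> = X0 * FP (Pow F)" unfolding FP_def by (simp add: sum_distrib_left)
  finally have "FP (Pow (insert x F)) = (1 + X0) * FP (Pow F)" by (simp add: algebra_simps)
  also have "1 + X0 = X1" by (simp add: one_pCons)
  finally show ?case using insert by simp
qed

lemma FP_union: "finite A \<Longrightarrow> finite B \<Longrightarrow> FP (A \<union> B) = FP A + FP B - FP (A \<inter> B)"
  unfolding FP_def using sum.union_inter[of A B] by (simp add: algebra_simps)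

lemma FP_faces:
  assumes "finite \<Delta>" "\<forall>A\<in>\<Delta>. card A \<le> d"
  shows "(\<Sum>i=0..d. monom (int (face_count \<Delta> i)) i) = FP \<Delta>"
proof -
  have "FP \<Delta> = (\<Sum>i=0..d. \<Sum>A\<in>{A. A \<in> \<Delta> \<and> card A = i}. [:0, 1:] ^ card A)"
  proof -
    have cd: "card ` \<Delta> \<subseteq> {0..d}" using assms(2) by auto
    show ?thesis unfolding FP_def by (rule sum.group[OF assms(1) finite_atLeastAtMost cd, symmetric])
  qed
  also have "\<dots> = (\<Sum>i=0..d. \<Sum>A\<in>{A. A \<in> \<Delta> \<and> card A = i}. [:0, 1:] ^ i)"
    by (rule sum.cong) auto
  also have "\<dots> = (\<Sum>i=0..d. monom (int (face_count \<Delta> i)) i)"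
    by (rule sum.cong) (auto simp: face_count_def monom_altdef of_nat_poly)
  finally show ?thesis by simp
qed

lemma PM_add[simp]: "PM (add_mset a D) = X1 ^ a + PM D"
  unfolding PM_def by simp

lemma PM_plus: "PM (A + B) = PM A + PM B"
  unfolding PM_def by simp

lemma hall_step:
  assumes h: "hall D E" and b: "b \<in># D" and ca: "c < a" and cb: "c < b"
  shows "hall (add_mset a D) (add_mset c E)"
  unfolding hall_def
proof
  fix v assume v: "v \<in># add_mset c E"
  show "size {#x\<in>#add_mset c E. v \<le> x#} < size {#x\<in>#add_mset a D. v < x#}"
  proof (cases "v \<le> c")
    case True
    then have lhs: "size {#x\<in>#add_mset c E. v \<le> x#} = Suc (size {#x\<in>#E. v \<le> x#})" by simp
    have rhs: "size {#x\<in>#add_mset a D. v < x#} = Suc (size {#x\<in>#D. v < x#})" using True ca by simp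
    show ?thesis
    proof (cases "v \<in># E")
      case True
      then show ?thesis using h lhs rhs unfolding hall_def by auto
    next
      case False
      then have vc: "v = c" using v by auto
      show ?thesis
      proof (cases "\<exists>e\<in>#E. c \<le> e")
        case True
        define v0 where "v0 = Min {e \<in> set_mset E. c \<le> e}"
        have fin: "finite {e \<in> set_mset E. c \<le> e}" by simp
        have "v0 \<in> {e \<in> set_mset E. c \<le> e}" unfolding v0_def by (rule Min_in[OF fin]) (use True in auto)
        then have v0in: "v0 \<in># E" "c \<le> v0" by auto
        have "{#x\<in>#E. c \<le> x#} = {#x\<in>#E. v0 \<le> x#}"
        proof (rule filter_mset_cong)
          fix x assume "x \<in># E"
          then show "(c \<le> x) = (v0 \<le> x)" using v0in(2) Min_le[OF fin] unfolding v0_def by fastforce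
        qed simp
        moreover have "size {#x\<in>#D. v0 < x#} \<le> size {#x\<in>#D. c < x#}"
          by (rule size_mset_mono, rule filter_mset_mono_strong) (use v0in in auto)
        ultimately show ?thesis using h v0in(1) lhs rhs vc unfolding hall_def by fastforce
      next
        case False
        then have "size {#x\<in>#E. c \<le> x#} = 0" by (auto simp: filter_mset_eq_mempty_iff)
        moreover have "b \<in># {#x\<in>#D. c < x#}" using b cb by simp
        then have "0 < size {#x\<in>#D. c < x#}" using nonempty_has_size by fastforce
        ultimately show ?thesis using lhs rhs unfolding vc by linarith
      qed
    qed
  next
    case False
    then have "v \<in># E" using v by auto
    then have "size {#x\<in>#E. v \<le> x#} < size {#x\<in>#D. v < x#}" using h unfolding hall_def by auto
    moreover have "size {#x\<in>#D. v < x#} \<le> size {#x\<in>#add_mset a D. v < x#}" by simp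
    ultimately show ?thesis using False by simp
  qed
qed


lemma hall_lt: "hall D E \<Longrightarrow> v \<in># E \<Longrightarrow> \<exists>x\<in>#D. v < x"
proof -
  assume h: "hall D E" and v: "v \<in># E"
  then have "0 < size {#x\<in>#D. v < x#}" unfolding hall_def by fastforce
  then have "{#x\<in>#D. v < x#} \<noteq> {#}" by (metis less_irrefl size_empty)
  then obtain y where "y \<in># {#x\<in>#D. v < x#}" by blast
  then show ?thesis by auto
qed

lemma hall_cancel:
  assumes "hall (add_mset w D) (add_mset w E)"
  shows "hall D E"
  unfolding hall_def
proof
  fix v assume v: "v \<in># E"
  have "size {#x\<in>#add_mset w E. v \<le> x#} < size {#x\<in>#add_mset w D. v < x#}"
    using assms v unfolding hall_def by auto
  then show "size {#x\<in>#E. v \<le> x#} < size {#x\<in>#D. v < x#}"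
    by (cases "w = v") (auto split: if_splits)
qed

lemma cancel:
  "hall D E \<Longrightarrow> \<exists>R. R \<subseteq># D \<and> R \<subseteq># E \<and> hall (D - R) (E - R) \<and>
      set_mset (D - R) \<inter> set_mset (E - R) = {}"
proof (induction "size E" arbitrary: D E rule: less_induct)
  case less
  show ?case
  proof (cases "set_mset D \<inter> set_mset E = {}")
    case True
    then show ?thesis using less.prems by (intro exI[of _ "{#}"]) auto
  next
    case False
    then obtain w where w: "w \<in># D" "w \<in># E" by auto
    define D0 where "D0 = D - {#w#}"
    define E0 where "E0 = E - {#w#}"
    have D: "D = add_mset w D0" and E: "E = add_mset w E0"
      using w unfolding D0_def E0_def by auto
    have h0: "hall D0 E0" using less.prems hall_cancel D E by metis
    have "size E0 < size E" using E by simp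
    then obtain R0 where R0: "R0 \<subseteq># D0" "R0 \<subseteq># E0" "hall (D0 - R0) (E0 - R0)"
      "set_mset (D0 - R0) \<inter> set_mset (E0 - R0) = {}"
      using less.hyps h0 by blast
    have eqD: "D - add_mset w R0 = D0 - R0" using D by simp
    have eqE: "E - add_mset w R0 = E0 - R0" using E by simp
    show ?thesis
      by (rule exI[of _ "add_mset w R0"]) (use R0 D E eqD eqE in auto)
  qed
qed

lemma sum_nth_shift: "(\<Sum>j=1..length l. f (l ! (j - 1))) = sum_list (map f l)"
proof -
  have "(\<Sum>j=1..length l. f (l ! (j - 1))) = (\<Sum>i=0..<length l. f (l ! i))"
    by (rule sum.reindex_bij_witness[of _ Suc "\<lambda>j. j - 1"]) auto
  also have "\<dots> = sum_list (map f l)" by (simp add: sum_list_sum_nth)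
  finally show ?thesis .
qed

lemma extract_seq:
  assumes h: "hall D E" and disj: "set_mset D \<inter> set_mset E = {}" and sz: "size D = size E + 1"
  shows "\<exists>(\<delta> :: nat \<Rightarrow> nat) (e :: nat \<Rightarrow> nat).
    (\<forall>i\<in>{1..size E+1}. \<forall>j\<in>{1..size E}. \<delta> i \<noteq> e j) \<and>
    (\<forall>j\<in>{1..size E}. \<delta> j \<le> \<delta> (j+1)) \<and> \<delta> (size E+1) = Max (set_mset D) \<and>
    (\<forall>j. 1 \<le> j \<and> j < size E \<longrightarrow> e j \<le> e (j+1)) \<and>
    (\<forall>j\<in>{1..size E}. e j < \<delta> j) \<and> (\<forall>i\<in>{1..size E+1}. \<delta> i \<in># D) \<and>
    (\<Sum>j=1..size E+1. X1 ^ \<delta> j) = PM D \<and> (\<Sum>j=1..size E. X1 ^ e j) = PM E"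
proof -
  define t where "t = size E"
  define xs where "xs = sorted_list_of_multiset D"
  define ys where "ys = sorted_list_of_multiset E"
  have mx: "mset xs = D" and my: "mset ys = E" and sx: "sorted xs" and sy: "sorted ys"
    unfolding xs_def ys_def by auto
  have lx: "length xs = t + 1" and ly: "length ys = t"
    using sz mx my unfolding t_def by (metis size_mset)+
  have setx: "set xs = set_mset D" and sety: "set ys = set_mset E" using mx my by auto
  define \<delta> where "\<delta> j = xs ! (j - 1)" for j
  define e where "e j = ys ! (j - 1)" for j
  have P1: "\<forall>i\<in>{1..t+1}. \<forall>j\<in>{1..t}. \<delta> i \<noteq> e j"
  proof (intro ballI)
    fix i j assume i: "i \<in> {1..t+1}" and j: "j \<in> {1..t}"
    have "i - 1 < length xs" using i lx by auto
    then have "\<delta> i \<in># D" using setx unfolding \<delta>_def by (metis nth_mem)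
    moreover have "j - 1 < length ys" using j ly by auto
    then have "e j \<in># E" using sety unfolding e_def by (metis nth_mem)
    ultimately show "\<delta> i \<noteq> e j" using disj by auto
  qed
  have P2: "\<forall>j\<in>{1..t}. \<delta> j \<le> \<delta> (j+1)"
    unfolding \<delta>_def using sx lx by (auto intro: sorted_nth_mono)
  have P3: "\<delta> (t+1) = Max (set_mset D)"
  proof -
    have ne: "set xs \<noteq> {}" using lx by auto
    obtain k where k: "k < length xs" "xs ! k = Max (set xs)"
      using Max_in[OF finite_set ne] by (metis in_set_conv_nth)
    have "xs ! k \<le> xs ! t" using sorted_nth_mono[OF sx, of k t] k lx by simp
    moreover have "xs ! t \<le> Max (set xs)" using lx by simp
    ultimately show ?thesis using k setx unfolding \<delta>_def by simp
  qed
  have P4: "\<forall>j. 1 \<le> j \<and> j < t \<longrightarrow> e j \<le> e (j+1)"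
    unfolding e_def using sy ly by (auto intro: sorted_nth_mono)
  have P5: "\<forall>j\<in>{1..t}. e j < \<delta> j"
  proof
    fix j assume j: "j \<in> {1..t}"
    define v where "v = ys ! (j - 1)"
    have "j - 1 < length ys" using j ly by auto
    then have vE: "v \<in># E" using sety unfolding v_def by (metis nth_mem)
    have hv: "length (filter (\<lambda>x. v \<le> x) ys) < length (filter (\<lambda>x. v < x) xs)"
      using h vE unfolding hall_def by (metis mx my mset_filter size_mset)
    have "drop (j - 1) ys = filter (\<lambda>x. v \<le> x) (drop (j - 1) ys)"
    proof (rule sym, rule filter_True, rule ballI)
      fix x assume "x \<in> set (drop (j - 1) ys)"
      then obtain k where "k < length (drop (j - 1) ys)" "x = drop (j - 1) ys ! k"
        by (metis in_set_conv_nth)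
      then show "v \<le> x" unfolding v_def using sy by (auto intro: sorted_nth_mono)
    qed
    then have "t - (j - 1) \<le> length (filter (\<lambda>x. v \<le> x) ys)"
      using ly by (metis append_take_drop_id filter_append length_append length_drop le_add2)
    show "e j < \<delta> j"
    proof (rule ccontr)
      assume "\<not> e j < \<delta> j"
      then have le: "xs ! (j - 1) \<le> v" unfolding e_def \<delta>_def v_def by simp
      have "filter (\<lambda>x. v < x) (take j xs) = []"
      proof (rule filter_False, rule ballI)
        fix x assume "x \<in> set (take j xs)"
        then obtain k where "k < length (take j xs)" "x = take j xs ! k"
          by (metis in_set_conv_nth)
        then have "x \<le> xs ! (j - 1)" using sx j lx by (auto intro: sorted_nth_mono)
        then show "\<not> v < x" using le by simp
      qed
      then have "length (filter (\<lambda>x. v < x) xs) \<le> t + 1 - j"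
        using lx by (metis append_take_drop_id filter_append length_append length_drop
            length_filter_le append_Nil)
      then show False using hv \<open>t - (j - 1) \<le> _\<close> j by simp
    qed
  qed
  have P6: "\<forall>i\<in>{1..t+1}. \<delta> i \<in># D"
  proof
    fix i assume i: "i \<in> {1..t+1}"
    then have "i - 1 < length xs" using lx by auto
    then show "\<delta> i \<in># D" using setx unfolding \<delta>_def by (metis nth_mem)
  qed
  have P7: "(\<Sum>j=1..t+1. X1 ^ \<delta> j) = PM D"
    using sum_nth_shift[of "\<lambda>k. X1 ^ k" xs] lx mx unfolding \<delta>_def PM_def
    by (metis sum_mset_sum_list mset_map)
  have P8: "(\<Sum>j=1..t. X1 ^ e j) = PM E"
    using sum_nth_shift[of "\<lambda>k. X1 ^ k" ys] ly my unfolding e_def PM_def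
    by (metis sum_mset_sum_list mset_map)
  show ?thesis using P1 P2 P3 P4 P5 P6 P7 P8 unfolding t_def by blast
qed


lemma gen_insert: "gen_complex (insert H S) = gen_complex S \<union> Pow H"
  unfolding gen_complex_def by auto

lemma gen_inter:
  assumes "G \<in> S" "\<forall>F\<in>S. F \<inter> H \<subseteq> G \<inter> H"
  shows "gen_complex S \<inter> Pow H = Pow (G \<inter> H)"
  using assms unfolding gen_complex_def by blast

lemma gen_sub: "S \<subseteq> Pow U \<Longrightarrow> gen_complex S \<subseteq> Pow U"
  unfolding gen_complex_def by auto

lemma facet_sub:
  assumes "F \<in> facets \<Delta>" "G \<in> \<Delta>" "F \<subseteq> G" shows "G = F"
  using assms unfolding facets_def by auto

lemma facets_gen:
  assumes "S \<subseteq> facets \<Delta>"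
  shows "facets (gen_complex S) = S"
proof
  show "facets (gen_complex S) \<subseteq> S"
  proof
    fix F assume F: "F \<in> facets (gen_complex S)"
    then obtain F' where F': "F' \<in> S" "F \<subseteq> F'" unfolding facets_def gen_complex_def by auto
    have "F' \<in> gen_complex S" using F' unfolding gen_complex_def by auto
    then have "F' = F" using F F' unfolding facets_def by auto
    then show "F \<in> S" using F' by simp
  qed
next
  show "S \<subseteq> facets (gen_complex S)"
  proof
    fix F assume F: "F \<in> S"
    have "\<forall>G\<in>gen_complex S. F \<subseteq> G \<longrightarrow> G = F"
    proof (intro ballI impI)
      fix G assume G: "G \<in> gen_complex S" "F \<subseteq> G"
      then obtain F' where F': "F' \<in> S" "G \<subseteq> F'" unfolding gen_complex_def by auto
      have "F' \<in> \<Delta>" using F' assms unfolding facets_def by auto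
      then have "F' = F" using facet_sub[of F \<Delta> F'] F F' G assms by auto
      then show "G = F" using F' G by auto
    qed
    moreover have "F \<in> gen_complex S" using F unfolding gen_complex_def by auto
    ultimately show "F \<in> facets (gen_complex S)" unfolding facets_def by auto
  qed
qed

lemma build:
  fixes Hs :: "nat set list"
  assumes dist: "distinct Hs" and sub: "set Hs \<subseteq> facets \<Delta>" and fin: "\<Delta> \<subseteq> Pow U" "finite U"
    and leaf: "\<forall>j. 1 \<le> j \<and> j < length Hs \<longrightarrow> is_leaf (gen_complex (set (take (Suc j) Hs))) (Hs ! j)"
  shows "1 \<le> k \<Longrightarrow> k \<le> length Hs \<Longrightarrow> \<exists>E. size E = k - 1 \<and>
     hall (mset (map card (take k Hs))) E \<and>
     FP (gen_complex (set (take k Hs))) = PM (mset (map card (take k Hs))) - PM E"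
proof (induction k)
  case 0
  then show ?case by simp
next
  case (Suc k)
  have facD: "\<And>F. F \<in> set Hs \<Longrightarrow> F \<in> facets \<Delta>" using sub by auto
  have finF: "\<And>F. F \<in> \<Delta> \<Longrightarrow> finite F" using fin finite_subset by blast
  have HD: "\<And>F. F \<in> set Hs \<Longrightarrow> F \<in> \<Delta>" using facD unfolding facets_def by auto
  show ?case
  proof (cases "k = 0")
    case True
    have t1: "take (Suc k) Hs = [Hs ! 0]" using True Suc.prems
      by (cases Hs) auto
    have "Hs ! 0 \<in> set Hs" using Suc.prems by (cases Hs) auto
    then have "finite (Hs ! 0)" using HD finF by auto
    moreover have "gen_complex {Hs ! 0} = Pow (Hs ! 0)" unfolding gen_complex_def by auto
    ultimately show ?thesis using t1 FP_Pow True
      by (intro exI[of _ "{#}"]) (auto simp: hall_def PM_def)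
  next
    case False
    define H where "H = Hs ! k"
    have kl: "k < length Hs" using Suc.prems by simp
    have tk: "take (Suc k) Hs = take k Hs @ [H]" unfolding H_def using kl
      by (simp add: take_Suc_conv_app_nth)
    define S where "S = set (take k Hs)"
    have S1: "set (take (Suc k) Hs) = insert H S" unfolding S_def using tk by auto
    have "distinct (take k Hs @ [H])" using tk dist by (metis distinct_take)
    then have HS: "H \<notin> S" unfolding S_def by simp
    obtain E where E: "size E = k - 1" "hall (mset (map card (take k Hs))) E"
      "FP (gen_complex S) = PM (mset (map card (take k Hs))) - PM E"
      using Suc.IH Suc.prems False unfolding S_def by auto
    have HHs: "H \<in> set Hs" unfolding H_def using kl by simp
    have SHs: "S \<subseteq> set Hs" unfolding S_def by (meson set_take_subset)
    have lf: "is_leaf (gen_complex (insert H S)) H"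
    proof -
      have "1 \<le> k" using False by simp
      then have "is_leaf (gen_complex (set (take (Suc k) Hs))) (Hs ! k)" using leaf kl by blast
      then show ?thesis using S1 H_def by simp
    qed
    have fg: "facets (gen_complex (insert H S)) = insert H S"
      using facets_gen[of "insert H S" \<Delta>] HHs SHs sub by auto
    obtain G where G: "G \<in> insert H S" "G \<noteq> H" "\<forall>F\<in>insert H S. F \<noteq> H \<longrightarrow> F \<inter> H \<subseteq> G \<inter> H"
      using lf fg unfolding is_leaf_def by auto
    have GS: "G \<in> S" using G by auto
    have Gint: "\<forall>F\<in>S. F \<inter> H \<subseteq> G \<inter> H" using G HS by auto
    have GHs: "G \<in> set Hs" using GS SHs by auto
    have finH: "finite H" and finG: "finite G" using HHs GHs HD finF by auto
    have "\<not> H \<subseteq> G" using facet_sub[of H \<Delta> G] facD[OF HHs] HD[OF GHs] G(2) by auto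
    then have "G \<inter> H \<subset> H" by auto
    then have ca: "card (G \<inter> H) < card H" using finH psubset_card_mono by blast
    have "\<not> G \<subseteq> H" using facet_sub[of G \<Delta> H] facD[OF GHs] HD[OF HHs] G(2) by auto
    then have "G \<inter> H \<subset> G" by auto
    then have cb: "card (G \<inter> H) < card G" using finG psubset_card_mono by blast
    have bD: "card G \<in># mset (map card (take k Hs))" using GS unfolding S_def by auto
    have mk: "mset (map card (take (Suc k) Hs)) = add_mset (card H) (mset (map card (take k Hs)))"
      using tk by simp
    have "S \<subseteq> Pow U" using SHs HD fin(1) by blast
    then have "gen_complex S \<subseteq> Pow U" by (rule gen_sub)
    then have finS: "finite (gen_complex S)" using fin(2) finite_subset by blast
    have "FP (gen_complex (insert H S)) = FP (gen_complex S) + FP (Pow H) - FP (Pow (G \<inter> H))"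
      unfolding gen_insert using FP_union[OF finS] finH gen_inter[OF GS Gint] by simp
    also have "\<dots> = PM (mset (map card (take (Suc k) Hs))) - PM (add_mset (card (G \<inter> H)) E)"
    proof -
      have fp1: "FP (Pow (G \<inter> H)) = X1 ^ card (G \<inter> H)" by (rule FP_Pow) (use finH in simp)
      show ?thesis using E(3) mk FP_Pow[OF finH] fp1 by (simp del: Pow_Int_eq)
    qed
    finally show ?thesis
      using S1 E hall_step[OF E(2) bD ca cb] mk False
      by (intro exI[of _ "add_mset (card (G \<inter> H)) E"]) auto
  qed
qed


theorem lemma2p2:
  fixes n s d :: nat and \<Delta> :: "nat set set"
  assumes "n \<ge> 1"
    and "simplicial_complex n \<Delta>"
    and "quasi_forest \<Delta>"
    and "d = max_face_size \<Delta>"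
    and "card (facets \<Delta>) = s + 1"
  shows "\<exists>t (\<delta> :: nat \<Rightarrow> nat) (e :: nat \<Rightarrow> nat). t \<le> s \<and>
    (\<forall>i\<in>{1..t+1}. \<forall>j\<in>{1..t}. \<delta> i \<noteq> e j) \<and>
    0 < \<delta> 1 \<and> (\<forall>j\<in>{1..t}. \<delta> j \<le> \<delta> (j+1)) \<and> \<delta> (t+1) = d \<and>
    (\<forall>j. 1 \<le> j \<and> j < t \<longrightarrow> e j \<le> e (j+1)) \<and> (\<forall>j\<in>{1..t}. e j < d) \<and>
    (\<forall>j\<in>{1..t}. e j < \<delta> j) \<and>
    (\<Sum>i=0..d. monom (int (face_count \<Delta> i)) i) =
      (\<Sum>j=1..t+1. [:1, 1:] ^ \<delta> j) - (\<Sum>j=1..t. [:1, 1::int:] ^ e j)"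
proof -
  have subP: "\<Delta> \<subseteq> Pow {1..n}" and single: "\<forall>i\<in>{1..n}. {i} \<in> \<Delta>"
    and closed: "\<forall>F\<in>\<Delta>. \<forall>G. G \<subseteq> F \<longrightarrow> G \<in> \<Delta>"
    using assms(2) unfolding simplicial_complex_def by auto
  have finD: "finite \<Delta>" using subP finite_subset finite_Pow_iff finite_atLeastAtMost by blast
  obtain Hs where Hs: "distinct Hs" "set Hs = facets \<Delta>"
    "\<forall>j. 1 \<le> j \<and> j < length Hs \<longrightarrow> is_leaf (gen_complex (set (take (Suc j) Hs))) (Hs ! j)"
    using assms(3) unfolding quasi_forest_def by blast
  have lenHs: "length Hs = s + 1" using distinct_card[OF Hs(1)] Hs(2) assms(5) by simp
  have facD: "facets \<Delta> \<subseteq> \<Delta>" unfolding facets_def by auto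
  have inFacet: "\<exists>F\<in>facets \<Delta>. A \<subseteq> F" if A: "A \<in> \<Delta>" for A
  proof -
    obtain m where m: "m \<in> \<Delta>" "A \<subseteq> m" "\<forall>b\<in>\<Delta>. m \<subseteq> b \<longrightarrow> m = b"
      using finite_has_maximal2[OF finD A] by blast
    then have "m \<in> facets \<Delta>" unfolding facets_def by auto
    then show ?thesis using m by blast
  qed
  have genD: "gen_complex (facets \<Delta>) = \<Delta>"
  proof
    show "gen_complex (facets \<Delta>) \<subseteq> \<Delta>" unfolding gen_complex_def using facD closed by blast
    show "\<Delta> \<subseteq> gen_complex (facets \<Delta>)" unfolding gen_complex_def using inFacet by blast
  qed
  have nonempty: "F \<noteq> {}" if F: "F \<in> facets \<Delta>" for F
  proof
    assume "F = {}"
    moreover have "{1} \<in> \<Delta>" using single assms(1) by auto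
    ultimately have "{1} = F" using F unfolding facets_def by blast
    then show False using \<open>F = {}\<close> by simp
  qed
  have finF: "finite F" if "F \<in> \<Delta>" for F
  proof -
    have "F \<subseteq> {1..n}" using that subP by auto
    then show ?thesis using finite_subset by blast
  qed
  define D0 where "D0 = mset (map card Hs)"
  obtain E0 where E0: "size E0 = s" "hall D0 E0" "FP \<Delta> = PM D0 - PM E0"
    using build[OF Hs(1) _ subP finite_atLeastAtMost Hs(3), of "s + 1"] Hs(2) lenHs genD
    unfolding D0_def by auto
  obtain R where R: "R \<subseteq># D0" "R \<subseteq># E0" "hall (D0 - R) (E0 - R)"
    "set_mset (D0 - R) \<inter> set_mset (E0 - R) = {}"
    using cancel[OF E0(2)] by blast
  define D' where "D' = D0 - R"
  define E' where "E' = E0 - R"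
  have szR: "size R \<le> s" using R(2) E0(1) size_mset_mono by fastforce
  have szE: "size E' = s - size R" unfolding E'_def using R(2) E0(1) by (simp add: size_Diff_submset)
  have szD: "size D' = size E' + 1" unfolding D'_def using R(1) szE szR lenHs
    by (simp add: size_Diff_submset D0_def)
  have PMeq: "PM D0 - PM E0 = PM D' - PM E'"
  proof -
    have "D0 = D' + R" "E0 = E' + R" unfolding D'_def E'_def using R(1,2) by auto
    then show ?thesis by (simp add: PM_plus)
  qed
  have setD0: "set_mset D0 = card ` facets \<Delta>" unfolding D0_def using Hs(2) by simp
  define m where "m = Max (set_mset D0)"
  have neD0: "set_mset D0 \<noteq> {}" using lenHs unfolding D0_def by auto
  have mD0: "m \<in># D0" unfolding m_def using Max_in[OF finite_set_mset neD0] by simp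
  have mE0: "m \<notin># E0"
  proof
    assume "m \<in># E0"
    then obtain x where x: "x \<in># D0" "m < x" using hall_lt[OF E0(2)] by blast
    have "x \<le> m" unfolding m_def using Max_ge[OF finite_set_mset x(1)] .
    then show False using x(2) by simp
  qed
  have "m \<notin># R" using mE0 mset_subset_eqD[OF R(2)] by blast
  then have c0: "count R m = 0" by (simp add: not_in_iff)
  have "0 < count D0 m" using mD0 by simp
  then have mD': "m \<in># D'" unfolding D'_def in_diff_count using c0 by simp
  have D'sub: "set_mset D' \<subseteq> set_mset D0" unfolding D'_def using in_diffD by fast
  have maxD': "Max (set_mset D') = m"
  proof (rule Max_eqI[OF finite_set_mset])
    show "y \<le> m" if yD': "y \<in># D'" for y
    proof -
      have "y \<in># D0" using yD' D'sub by blast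
      then show ?thesis unfolding m_def using Max_ge[OF finite_set_mset] by blast
    qed
    show "m \<in># D'" by (rule mD')
  qed
  have dm: "d = m"
  proof -
    have "d = Max (card ` \<Delta>)" using assms(4) unfolding max_face_size_def by simp
    also have "\<dots> = m"
    proof (rule Max_eqI)
      show "finite (card ` \<Delta>)" using finD by simp
      show "y \<le> m" if yD: "y \<in> card ` \<Delta>" for y
      proof -
        obtain A where A: "A \<in> \<Delta>" "y = card A" using yD by blast
        obtain F where F: "F \<in> facets \<Delta>" "A \<subseteq> F" using inFacet[OF A(1)] by blast
        have "card A \<le> card F" using F finF facD card_mono by blast
        moreover have "card F \<in># D0" using F setD0 by blast
        moreover have "card F \<le> m" unfolding m_def using Max_ge[OF finite_set_mset] calculation(2) by blast
        ultimately show ?thesis using A by simp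
      qed
      show "m \<in> card ` \<Delta>" using mD0 setD0 facD by blast
    qed
    finally show ?thesis .
  qed
  have cardle: "\<forall>A\<in>\<Delta>. card A \<le> d"
  proof
    fix A assume A: "A \<in> \<Delta>"
    obtain F where F: "F \<in> facets \<Delta>" "A \<subseteq> F" using inFacet[OF A] by blast
    have "card A \<le> card F" using F finF facD card_mono by blast
    moreover have "card F \<in># D0" using F setD0 by blast
        moreover have "card F \<le> m" unfolding m_def using Max_ge[OF finite_set_mset] calculation(2) by blast
    ultimately show "card A \<le> d" using dm by simp
  qed
  have poly: "(\<Sum>i=0..d. monom (int (face_count \<Delta> i)) i) = PM D' - PM E'"
    using FP_faces[OF finD cardle] E0(3) PMeq by simp
  have hD': "hall D' E'" unfolding D'_def E'_def by (rule R(3))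
  have dD': "set_mset D' \<inter> set_mset E' = {}" unfolding D'_def E'_def by (rule R(4))
  obtain \<delta> e where X0:
    "(\<forall>i\<in>{1..size E'+1}. \<forall>j\<in>{1..size E'}. \<delta> i \<noteq> e j) \<and>
    (\<forall>j\<in>{1..size E'}. \<delta> j \<le> \<delta> (j+1)) \<and> \<delta> (size E'+1) = Max (set_mset D') \<and>
    (\<forall>j. 1 \<le> j \<and> j < size E' \<longrightarrow> e j \<le> e (j+1)) \<and>
    (\<forall>j\<in>{1..size E'}. e j < \<delta> j) \<and> (\<forall>i\<in>{1..size E'+1}. \<delta> i \<in># D') \<and>
    (\<Sum>j=1..size E'+1. X1 ^ \<delta> j) = PM D' \<and> (\<Sum>j=1..size E'. X1 ^ e j) = PM E'"
    using extract_seq[OF hD' dD' szD] by blast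
  note X = conjunct1[OF X0] conjunct1[OF conjunct2[OF X0]] conjunct1[OF conjunct2[OF conjunct2[OF X0]]]
    conjunct1[OF conjunct2[OF conjunct2[OF conjunct2[OF X0]]]]
    conjunct1[OF conjunct2[OF conjunct2[OF conjunct2[OF conjunct2[OF X0]]]]]
    conjunct1[OF conjunct2[OF conjunct2[OF conjunct2[OF conjunct2[OF conjunct2[OF X0]]]]]]
    conjunct1[OF conjunct2[OF conjunct2[OF conjunct2[OF conjunct2[OF conjunct2[OF conjunct2[OF X0]]]]]]]
    conjunct2[OF conjunct2[OF conjunct2[OF conjunct2[OF conjunct2[OF conjunct2[OF conjunct2[OF X0]]]]]]]
  define t where "t = size E'"
  have pos: "0 < \<delta> 1"
  proof -
    have "\<delta> 1 \<in># D'" using X(6) by auto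
    then have "\<delta> 1 \<in> card ` facets \<Delta>" using D'sub setD0 by auto
    then obtain F where F: "F \<in> facets \<Delta>" "\<delta> 1 = card F" by blast
    have "finite F" using F(1) facD finF by blast
    then show ?thesis using nonempty[OF F(1)] F(2) by (simp add: card_gt_0_iff)
  qed
  have elt: "\<forall>j\<in>{1..t}. e j < d"
  proof
    fix j assume j: "j \<in> {1..t}"
    then have "e j < \<delta> j" using X(5) unfolding t_def by blast
    moreover have "\<delta> j \<in># D'" using X(6) j unfolding t_def by auto
    then have "\<delta> j \<le> Max (set_mset D')" using Max_ge[OF finite_set_mset] by blast
    then have "\<delta> j \<le> m" using maxD' by simp
    ultimately show "e j < d" using dm by simp
  qed
  have tle: "t \<le> s" unfolding t_def using szE by simp
  have last: "\<delta> (t+1) = d" using X(3) maxD' dm unfolding t_def by simp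
  have polyt: "(\<Sum>i=0..d. monom (int (face_count \<Delta> i)) i) =
      (\<Sum>j=1..t+1. [:1, 1:] ^ \<delta> j) - (\<Sum>j=1..t. [:1, 1::int:] ^ e j)"
    using poly X(7,8) unfolding t_def by simp
  note Y = X[folded t_def]
  show ?thesis
    apply (rule exI[of _ t], rule exI[of _ \<delta>], rule exI[of _ e])
    using tle Y(1) pos Y(2) last Y(4) elt Y(5) polyt by (intro conjI) assumption+
qed

end
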